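(* Let $\mathcal V\subset\mathbb Q$ satisfy Hypothesis (H) and let $\mathcal R\subset\mathbb Q$ satisfy property $\star_{\mathcal V}$. Set $\Gamma=\mathcal V\setminus\mathcal R$ and $\Lambda=\psi(\Gamma)$. Then for every $g\in\mathscr H_{|\Lambda}$ there exists $f\in\mathscr H_{|\Gamma}$ such that $L(f)=g$.
   Context: Let $\mathbf K$ be a field and $\ell\geq 2$ an integer. Let $\mathscr H$ be the field of Hahn series $f=\sum_{\gamma\in\mathbb Q}f_\gamma z^\gamma$ with coefficients in $\mathbf K$ and well-ordered support $\operatorname{supp} f=\{\gamma: f_\gamma\neq 0\}$; for $Q\subset\mathbb Q$, $\mathscr H_{|Q}=\{f\in\mathscr H:\operatorname{supp} f\subset Q\}$. Let $\phi_\ell$ be the automorphism $f(z)\mapsto f(z^\ell)$. Let $L=a_n\phi_\ell^n+\dots+a_0$ with $n\geq1$, $a_i\in\mathbf K[z]$, $a_0a_n\neq0$, acting by $L(f)=\sum_i a_i f(z^{\ell^i})$. Let $\mathcal P(L)=\{(\ell^i,j): 0\le i\le n,\ j\in\operatorname{supp} a_i\}$. The Newton polygon of $L$ is the convex hull of $\{(\ell^i,j): 0\le i\le n,\ j\geq\operatorname{val} a_i\}\subset\mathbb R^2$; the slopes of its non-vertical edges form $\mathcal S(L)$. Define $\Psi(v)=\{v\ell^i+j:(\ell^i,j)\in\mathcal P(L)\}$, $\psi(v)=\min\Psi(v)$, $\pi(q)=\max\{(q-j)/\ell^i:(\ell^i,j)\in\mathcal P(L)\}$; images of sets are taken elementwise.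 Hypothesis (H) on $\mathcal V\subset\mathbb Q$: (1) every $f\in\mathscr H$ with $L(f)=0$ satisfies $\operatorname{supp} f\subset\mathcal V$; (2) $\mathcal V$ is well-ordered; (3) $-\mathcal S(L)\subset\mathcal V$; (4) $\bigcup_{v\in\mathcal V}\pi(\Psi(v))=\mathcal V$. A set $\mathcal R\subset\mathbb Q$ satisfies $\star_{\mathcal V}$ if (a) $-\mathcal S(L)\subset\mathcal R\subset\mathcal V$ and (b) $\bigcup_{v\in\mathcal V\setminus\mathcal R}\pi(\Psi(v))=\mathcal V\setminus\mathcal R$. *)

theory Defs
  imports "HOL-Analysis.Analysis" "HOL-Computational_Algebra.Polynomial"
begin

text \<open>Hahn series over Q with coefficients in a field: coefficient functions
  rat => 'k whose support is well-ordered.\<close>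

definition supp :: "(rat \<Rightarrow> 'k::zero) \<Rightarrow> rat set" where
  "supp f = {\<gamma>. f \<gamma> \<noteq> 0}"

definition well_ordered_set :: "rat set \<Rightarrow> bool" where
  "well_ordered_set Q \<longleftrightarrow> (\<forall>S. S \<subseteq> Q \<and> S \<noteq> {} \<longrightarrow> (\<exists>m\<in>S. \<forall>x\<in>S. m \<le> x))"

definition hahn :: "(rat \<Rightarrow> 'k::zero) \<Rightarrow> bool" where
  "hahn f \<longleftrightarrow> well_ordered_set (supp f)"

definition psupp :: "'k::zero poly \<Rightarrow> nat set" where
  "psupp p = {j. coeff p j \<noteq> 0}"

definition pval :: "'k::zero poly \<Rightarrow> nat" where
  "pval p = (LEAST j. coeff p j \<noteq> 0)"

text \<open>The Mahler operator L = sum_{i=0}^n a_i phi_l^i acting on a Hahn series: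
  the coefficient of z^q in a_i(z) f(z^(l^i)) is
  sum_j coeff a_i j * f_{(q-j)/l^i}.\<close>
definition Lop :: "nat \<Rightarrow> nat \<Rightarrow> (nat \<Rightarrow> 'k::field poly) \<Rightarrow> (rat \<Rightarrow> 'k) \<Rightarrow> (rat \<Rightarrow> 'k)" where
  "Lop l n a f = (\<lambda>q. \<Sum>i\<le>n. \<Sum>j\<le>degree (a i).
       coeff (a i) j * f ((q - of_nat j) / of_nat (l ^ i)))"

definition PL :: "nat \<Rightarrow> nat \<Rightarrow> (nat \<Rightarrow> 'k::zero poly) \<Rightarrow> (nat \<times> nat) set" where
  "PL l n a = {(l ^ i, j) | i j. i \<le> n \<and> j \<in> psupp (a i)}"

definition Psi :: "nat \<Rightarrow> nat \<Rightarrow> (nat \<Rightarrow> 'k::zero poly) \<Rightarrow> rat \<Rightarrow> rat set" where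
  "Psi l n a v = {v * of_nat p + of_nat j | p j. (p, j) \<in> PL l n a}"

definition psi :: "nat \<Rightarrow> nat \<Rightarrow> (nat \<Rightarrow> 'k::zero poly) \<Rightarrow> rat \<Rightarrow> rat" where
  "psi l n a v = Min (Psi l n a v)"

definition piL :: "nat \<Rightarrow> nat \<Rightarrow> (nat \<Rightarrow> 'k::zero poly) \<Rightarrow> rat \<Rightarrow> rat" where
  "piL l n a q = Max {(q - of_nat j) / of_nat p | p j. (p, j) \<in> PL l n a}"

definition newton_polygon :: "nat \<Rightarrow> nat \<Rightarrow> (nat \<Rightarrow> 'k::zero poly) \<Rightarrow> (real \<times> real) set" where
  "newton_polygon l n a = convex hull
     {(real (l ^ i), y) | i y. i \<le> n \<and> a i \<noteq> 0 \<and> y \<ge> real (pval (a i))}"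

definition slopes :: "nat \<Rightarrow> nat \<Rightarrow> (nat \<Rightarrow> 'k::zero poly) \<Rightarrow> real set" where
  "slopes l n a = {(snd y - snd x) / (fst y - fst x) | e x y.
      e face_of newton_polygon l n a \<and> aff_dim e = 1 \<and>
      x \<in> e \<and> y \<in> e \<and> fst x \<noteq> fst y}"

definition neg_slopes_in :: "nat \<Rightarrow> nat \<Rightarrow> (nat \<Rightarrow> 'k::zero poly) \<Rightarrow> rat set \<Rightarrow> bool" where
  "neg_slopes_in l n a X \<longleftrightarrow> (\<forall>s \<in> slopes l n a. - s \<in> of_rat ` X)"

definition hypH :: "nat \<Rightarrow> nat \<Rightarrow> (nat \<Rightarrow> 'k::field poly) \<Rightarrow> rat set \<Rightarrow> bool" where
  "hypH l n a V \<longleftrightarrow>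
     (\<forall>f. hahn f \<and> Lop l n a f = (\<lambda>_. 0) \<longrightarrow> supp f \<subseteq> V) \<and>
     well_ordered_set V \<and>
     neg_slopes_in l n a V \<and>
     (\<Union>v\<in>V. piL l n a ` Psi l n a v) = V"

definition star_prop :: "nat \<Rightarrow> nat \<Rightarrow> (nat \<Rightarrow> 'k::field poly) \<Rightarrow> rat set \<Rightarrow> rat set \<Rightarrow> bool" where
  "star_prop l n a V R \<longleftrightarrow>
     neg_slopes_in l n a R \<and> R \<subseteq> V \<and>
     (\<Union>v\<in>V - R. piL l n a ` Psi l n a v) = V - R"

end

theory Submission imports Defs begin

locale mset =
  fixes l n :: nat and a :: "nat \<Rightarrow> 'k::field poly"
  assumes l2: "l \<ge> 2" and a0: "a 0 \<noteq> 0"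
begin

lemma lpow_pos: "l ^ i > 0" using l2 by simp

lemma psupp_deg: "j \<in> psupp p \<Longrightarrow> j \<le> degree p"
  unfolding psupp_def by (auto intro: le_degree)

lemma pval_in: "p \<noteq> 0 \<Longrightarrow> pval p \<in> psupp p"
proof -
  assume "p \<noteq> 0"
  then have "coeff p (degree p) \<noteq> 0" by simp
  then have ex: "\<exists>j. coeff p j \<noteq> 0" by blast
  show ?thesis using LeastI_ex[OF ex] unfolding psupp_def pval_def by simp
qed

lemma pval_le: "j \<in> psupp p \<Longrightarrow> pval p \<le> j"
  unfolding psupp_def pval_def by (auto intro: Least_le)

lemma Psi_eq: "Psi l n a v = (\<lambda>x. v * of_nat (fst x) + of_nat (snd x)) ` PL l n a"
proof (rule set_eqI, rule iffI)
  fix y assume "y \<in> Psi l n a v"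
  then obtain p j where "y = v * of_nat p + of_nat j" "(p,j) \<in> PL l n a" unfolding Psi_def by blast
  then show "y \<in> (\<lambda>x. v * of_nat (fst x) + of_nat (snd x)) ` PL l n a"
    by (intro image_eqI[of _ _ "(p,j)"]) auto
next
  fix y assume "y \<in> (\<lambda>x. v * of_nat (fst x) + of_nat (snd x)) ` PL l n a"
  then obtain x where "x \<in> PL l n a" "y = v * of_nat (fst x) + of_nat (snd x)" by blast
  then show "y \<in> Psi l n a v" unfolding Psi_def
    by (intro CollectI exI[of _ "fst x"] exI[of _ "snd x"]) simp
qed

lemma piL_eq: "piL l n a q = Max ((\<lambda>x. (q - of_nat (snd x)) / of_nat (fst x)) ` PL l n a)"
proof -
  have "{(q - of_nat j) / of_nat p | p j. (p, j) \<in> PL l n a} = (\<lambda>x. (q - of_nat (snd x)) / of_nat (fst x)) ` PL l n a"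
  proof (rule set_eqI, rule iffI)
    fix y assume "y \<in> {(q - of_nat j) / of_nat p | p j. (p, j) \<in> PL l n a}"
    then obtain p j where "y = (q - of_nat j) / of_nat p" "(p,j) \<in> PL l n a" by blast
    then show "y \<in> (\<lambda>x. (q - of_nat (snd x)) / of_nat (fst x)) ` PL l n a"
      by (intro image_eqI[of _ _ "(p,j)"]) auto
  next
    fix y assume "y \<in> (\<lambda>x. (q - of_nat (snd x)) / of_nat (fst x)) ` PL l n a"
    then obtain x where "x \<in> PL l n a" "y = (q - of_nat (snd x)) / of_nat (fst x)" by blast
    then show "y \<in> {(q - of_nat j) / of_nat p | p j. (p, j) \<in> PL l n a}"
      by (intro CollectI exI[of _ "fst x"] exI[of _ "snd x"]) simp
  qed
  then show ?thesis unfolding piL_def by simp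
qed

lemma PL_iff: "(p, j) \<in> PL l n a \<longleftrightarrow> (\<exists>i\<le>n. p = l ^ i \<and> j \<in> psupp (a i))"
  unfolding PL_def by auto

lemma PL_finite: "finite (PL l n a)"
proof -
  have "PL l n a \<subseteq> (\<lambda>x. (l ^ fst x, snd x)) ` (SIGMA i:{..n}. {..degree (a i)})"
  proof
    fix x assume "x \<in> PL l n a"
    then obtain i j where x: "x = (l ^ i, j)" "i \<le> n" "j \<in> psupp (a i)"
      unfolding PL_def by blast
    have "j \<le> degree (a i)" using x(3) unfolding psupp_def by (auto intro: le_degree)
    then show "x \<in> (\<lambda>x. (l ^ fst x, snd x)) ` (SIGMA i:{..n}. {..degree (a i)})"
      using x by (intro image_eqI[of _ _ "(i,j)"]) auto
  qed
  moreover have "finite (SIGMA i:{..n}. {..degree (a i)})" by (rule finite_SigmaI) auto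
  ultimately show ?thesis using finite_subset finite_imageI by blast
qed


lemma PL_ne: "PL l n a \<noteq> {}"
proof -
  have "(l ^ 0, pval (a 0)) \<in> PL l n a" unfolding PL_iff using pval_in[OF a0] by blast
  then show ?thesis by blast
qed

lemma PL_pos: "(p, j) \<in> PL l n a \<Longrightarrow> p > 0"
  unfolding PL_iff using lpow_pos by blast

lemma Psi_fin: "finite (Psi l n a v)" and Psi_ne: "Psi l n a v \<noteq> {}"
  using PL_finite PL_ne unfolding Psi_eq by simp_all

lemma psi_in: "psi l n a v \<in> Psi l n a v"
  unfolding psi_def using Psi_fin Psi_ne by (rule Min_in)

lemma psi_le: "x \<in> Psi l n a v \<Longrightarrow> psi l n a v \<le> x"
  unfolding psi_def using Psi_fin by (rule Min_le)

lemma PsiI: "(p, j) \<in> PL l n a \<Longrightarrow> v * of_nat p + of_nat j \<in> Psi l n a v"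
  unfolding Psi_def by blast

lemma psi_mono: assumes "v < w" shows "psi l n a v < psi l n a w"
proof -
  obtain p j where pj: "(p,j) \<in> PL l n a" "psi l n a w = w * of_nat p + of_nat j"
    using psi_in[of w] unfolding Psi_def by blast
  have "p > 0" using PL_pos pj by auto
  then have "v * of_nat p < w * of_nat p" using assms by simp
  then have "psi l n a v < psi l n a w"
    using psi_le[OF PsiI[OF pj(1), of v]] pj(2) by linarith
  then show ?thesis .
qed

lemma psi_piL: "psi l n a (piL l n a q) = q"
proof -
  let ?S = "(\<lambda>x. (q - of_nat (snd x)) / of_nat (fst x)) ` PL l n a"
  have fin: "finite ?S" and ne: "?S \<noteq> {}" using PL_finite PL_ne by simp_all
  obtain p0 j0 where pj0: "(p0,j0) \<in> PL l n a" "piL l n a q = (q - of_nat j0) / of_nat p0"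
  proof -
    obtain x where "x \<in> PL l n a" "piL l n a q = (q - of_nat (snd x)) / of_nat (fst x)"
      using Max_in[OF fin ne] unfolding piL_eq by blast
    then show ?thesis using that[of "fst x" "snd x"] by simp
  qed
  have "p0 > 0" using PL_pos pj0 by auto
  then have e0: "piL l n a q * of_nat p0 = q - of_nat j0" unfolding pj0(2) by simp
  have "psi l n a (piL l n a q) \<le> piL l n a q * of_nat p0 + of_nat j0" by (rule psi_le[OF PsiI[OF pj0(1)]])
  then have le: "psi l n a (piL l n a q) \<le> q" using e0 by linarith

  obtain p j where pj: "(p,j) \<in> PL l n a" "psi l n a (piL l n a q) = piL l n a q * of_nat p + of_nat j"
    using psi_in[of "piL l n a q"] unfolding Psi_def by blast
  have "p > 0" using PL_pos pj by auto
  have "(q - of_nat j) / of_nat p \<le> piL l n a q"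
    unfolding piL_eq by (rule Max_ge[OF fin]) (use pj(1) in \<open>intro image_eqI[of _ _ "(p,j)"], auto\<close>)
  then have "q - of_nat j \<le> piL l n a q * of_nat p" using \<open>p > 0\<close>
    by (simp add: divide_le_eq)
  then show ?thesis using le pj(2) by linarith
qed

lemma pair_in_PL: "i \<le> n \<Longrightarrow> coeff (a i) j \<noteq> 0 \<Longrightarrow> (l ^ i, j) \<in> PL l n a"
  unfolding PL_iff psupp_def by blast

lemma slope_lemma:
  assumes ns: "neg_slopes_in l n a R" and vR: "v \<notin> R"
    and i1: "i1 \<le> n" and i2: "i2 \<le> n"
    and c1: "coeff (a i1) j1 \<noteq> 0" and c2: "coeff (a i2) j2 \<noteq> 0"
    and e1: "v * of_nat (l ^ i1) + of_nat j1 = psi l n a v"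
    and e2: "v * of_nat (l ^ i2) + of_nat j2 = psi l n a v"
  shows "i1 = i2 \<and> j1 = j2"
proof (cases "i1 = i2")
  case True then show ?thesis using e1 e2 by simp
next
  case False
  have l1: "1 < l" using l2 by simp
  have pne: "l ^ i1 \<noteq> l ^ i2" using False power_inject_exp[OF l1] by simp
  define vr where "vr = (of_rat v :: real)"
  define m where "m = (of_rat (psi l n a v) :: real)"
  define c where "c = (vr, 1::real)"
  define S where "S = {(real (l ^ i), y) | i y. i \<le> n \<and> a i \<noteq> 0 \<and> y \<ge> real (pval (a i))}"
  have NP: "newton_polygon l n a = convex hull S" unfolding newton_polygon_def S_def by simp
  have castE: "vr * real p + real j = of_rat (v * of_nat p + of_nat j)" for p j
    unfolding vr_def by (simp add: of_rat_add of_rat_mult)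
  have Ssub: "S \<subseteq> {x. inner c x \<ge> m}"
  proof
    fix x assume "x \<in> S"
    then obtain i y where x: "x = (real (l ^ i), y)" "i \<le> n" "a i \<noteq> 0" "y \<ge> real (pval (a i))"
      unfolding S_def by blast
    have "(l ^ i, pval (a i)) \<in> PL l n a" unfolding PL_def using x pval_in by blast
    then have "psi l n a v \<le> v * of_nat (l ^ i) + of_nat (pval (a i))" by (rule psi_le[OF PsiI])
    then have "m \<le> vr * real (l ^ i) + real (pval (a i))"
      unfolding m_def castE of_rat_less_eq .
    then show "x \<in> {x. inner c x \<ge> m}" using x unfolding c_def by (simp add: inner_Pair)
  qed
  have ge: "\<And>x. x \<in> newton_polygon l n a \<Longrightarrow> inner c x \<ge> m"
  proof -
    have "convex hull S \<subseteq> {x. inner c x \<ge> m}"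
      by (rule hull_minimal[OF Ssub]) (rule convex_halfspace_ge)
    then show "\<And>x. x \<in> newton_polygon l n a \<Longrightarrow> inner c x \<ge> m" using NP by blast
  qed
  define e where "e = newton_polygon l n a \<inter> {x. inner c x = m}"
  have face: "e face_of newton_polygon l n a"
    unfolding e_def by (rule face_of_Int_supporting_hyperplane_ge) (auto simp: NP ge)
  define P1 where "P1 = (real (l ^ i1), real j1)"
  define P2 where "P2 = (real (l ^ i2), real j2)"
  have inS: "(real (l ^ i), real j) \<in> S" if "i \<le> n" "coeff (a i) j \<noteq> 0" for i j
  proof -
    have "a i \<noteq> 0" using that by auto
    moreover have "pval (a i) \<le> j" using that by (intro pval_le) (simp add: psupp_def)
    ultimately show ?thesis unfolding S_def using that by auto
  qed
  have onH: "inner c (real (l ^ i), real j) = m" if "v * of_nat (l ^ i) + of_nat j = psi l n a v" for i j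
  proof -
    have "vr * real (l ^ i) + real j = m" unfolding castE m_def using that by simp
    then show ?thesis unfolding c_def by (simp add: inner_Pair)
  qed
  have P1e: "P1 \<in> e" unfolding e_def P1_def NP
    using hull_inc[OF inS[OF i1 c1]] onH[OF e1] by auto
  have P2e: "P2 \<in> e" unfolding e_def P2_def NP
    using hull_inc[OF inS[OF i2 c2]] onH[OF e2] by auto
  have fne: "real (l ^ i1) \<noteq> real (l ^ i2)" using pne by (simp only: of_nat_eq_iff) simp
  have P12: "P1 \<noteq> P2" unfolding P1_def P2_def using fne by (simp only: prod.inject) simp
  have "aff_dim e \<le> aff_dim {x. inner c x = m}" by (rule aff_dim_subset) (auto simp: e_def)
  also have "\<dots> = 1"
  proof -
    have cne: "c \<noteq> 0" unfolding c_def by (simp add: zero_prod_def)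
    show ?thesis using aff_dim_hyperplane[OF cne, of m] by simp
  qed
  finally have d1: "aff_dim e \<le> 1" .
  have "aff_dim {P1, P2} \<le> aff_dim e" by (rule aff_dim_subset) (use P1e P2e in auto)
  then have "aff_dim e = 1" using d1 P12 by simp
  then have "(snd P2 - snd P1) / (fst P2 - fst P1) \<in> slopes l n a"
  proof -
    have "fst P1 \<noteq> fst P2" unfolding P1_def P2_def using fne by (simp only: fst_conv not_False_eq_True)
    then show ?thesis unfolding slopes_def using face P1e P2e \<open>aff_dim e = 1\<close>
      by (intro CollectI exI[of _ e] exI[of _ P1] exI[of _ P2]) simp
  qed
  moreover have "(snd P2 - snd P1) / (fst P2 - fst P1) = - vr"
  proof -
    have h1: "vr * real (l ^ i1) + real j1 = m" unfolding castE m_def using e1 by simp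
    have h2: "vr * real (l ^ i2) + real j2 = m" unfolding castE m_def using e2 by simp
    have "real (l ^ i2) - real (l ^ i1) \<noteq> 0" using fne by (simp only: right_minus_eq)
    moreover have "real j2 - real j1 = - vr * (real (l ^ i2) - real (l ^ i1))"
      using h1 h2 by (simp add: algebra_simps)
    ultimately show ?thesis unfolding P1_def P2_def by simp
  qed
  ultimately have "vr \<in> of_rat ` R" using ns unfolding neg_slopes_in_def by force
  then have "v \<in> R" unfolding vr_def by (auto simp: of_rat_eq_iff)
  then show ?thesis using vR by simp
qed

lemma main_construction:
  fixes V R :: "rat set" and g :: "rat \<Rightarrow> 'k"
  assumes ns: "neg_slopes_in l n a R"
    and sub: "(\<Union>v\<in>V - R. piL l n a ` Psi l n a v) = V - R"
    and wo: "well_ordered_set V"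
    and gs: "supp g \<subseteq> psi l n a ` (V - R)"
  shows "\<exists>f. hahn f \<and> supp f \<subseteq> V - R \<and> Lop l n a f = g"
proof -
  define G where "G = V - R"
  define P where "P = psi l n a"
  define T where "T = (\<lambda>i j (q::rat). (q - of_nat j) / of_nat (l ^ i) :: rat)"
  define c where "c = (\<lambda>v. \<Sum>i\<le>n. \<Sum>j\<le>degree (a i). if T i j (P v) = v then coeff (a i) j else 0)"
  define S where "S = (\<lambda>h v. \<Sum>i\<le>n. \<Sum>j\<le>degree (a i).
     if T i j (P v) \<noteq> v \<and> T i j (P v) \<in> G \<and> T i j (P v) < v then coeff (a i) j * h (T i j (P v)) else 0)"
  define F where "F = (\<lambda>h v. if v \<in> G then (g (P v) - S h v) / c v else 0)"
  define Rel where "Rel = {(u,v). u \<in> G \<and> v \<in> G \<and> u < v}"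
  have GV: "G \<subseteq> V" unfolding G_def by blast
  have wf: "wf Rel"
  proof (rule wfI_min)
    fix x :: rat and Q assume xQ: "x \<in> Q"
    show "\<exists>z\<in>Q. \<forall>y. (y, z) \<in> Rel \<longrightarrow> y \<notin> Q"
    proof (cases "Q \<inter> G = {}")
      case True
      then show ?thesis using xQ unfolding Rel_def by blast
    next
      case False
      have "Q \<inter> G \<subseteq> V" using GV by blast
      then obtain m where m: "m \<in> Q \<inter> G" "\<forall>y\<in>Q \<inter> G. m \<le> y"
        using wo False unfolding well_ordered_set_def by meson
      have "\<forall>y. (y, m) \<in> Rel \<longrightarrow> y \<notin> Q"
      proof (intro allI impI notI)
        fix y assume "(y, m) \<in> Rel" "y \<in> Q"
        then have yQ: "y \<in> Q \<inter> G" and ym: "y < m" unfolding Rel_def by auto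
        from m(2) yQ have "m \<le> y" by blast
        then show False using ym by simp
      qed
      then show ?thesis using m(1) by blast
    qed
  qed
  have adm: "adm_wf Rel F"
    unfolding adm_wf_def
  proof (intro allI impI)
    fix f1 f2 :: "rat \<Rightarrow> 'k" and x
    assume h: "\<forall>z. (z, x) \<in> Rel \<longrightarrow> f1 z = f2 z"
    show "F f1 x = F f2 x"
    proof (cases "x \<in> G")
      case True
      have "S f1 x = S f2 x" unfolding S_def
      proof (intro sum.cong refl)
        fix i j
        show "(if T i j (P x) \<noteq> x \<and> T i j (P x) \<in> G \<and> T i j (P x) < x then coeff (a i) j * f1 (T i j (P x)) else 0) =
              (if T i j (P x) \<noteq> x \<and> T i j (P x) \<in> G \<and> T i j (P x) < x then coeff (a i) j * f2 (T i j (P x)) else 0)"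
          using h True unfolding Rel_def by auto
      qed
      then show ?thesis unfolding F_def by simp
    next
      case False then show ?thesis unfolding F_def by simp
    qed
  qed
  define f where "f = wfrec Rel F"
  have fF: "f = F f" unfolding f_def by (rule wfrec_fixpoint[OF wf adm])
  have fv: "f v = F f v" for v using fF by (rule fun_cong)
  have f0: "v \<notin> G \<Longrightarrow> f v = 0" for v using fv[of v] unfolding F_def by simp
  have suppf: "supp f \<subseteq> G" unfolding supp_def using f0 by blast
  have K1: "T i j q = u \<longleftrightarrow> u * of_nat (l ^ i) + of_nat j = q" for i j q u
  proof -
    have "(of_nat (l ^ i) :: rat) \<noteq> 0" using lpow_pos by simp
    then show ?thesis unfolding T_def by (auto simp: field_simps)
  qed
  have K2: "P (T i j q) \<le> q" if "i \<le> n" "coeff (a i) j \<noteq> 0" for i j q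
  proof -
    have "T i j q * of_nat (l ^ i) + of_nat j = q" using K1 by blast
    moreover have "(l ^ i, j) \<in> PL l n a" using that by (rule pair_in_PL)
    ultimately show ?thesis unfolding P_def using psi_le[OF PsiI] by metis
  qed
  have K3: "c v \<noteq> 0" if vG: "v \<in> G" for v
  proof -
    obtain x where x: "x \<in> PL l n a" "P v = v * of_nat (fst x) + of_nat (snd x)"
      using psi_in[of v] unfolding Psi_eq P_def by blast
    obtain p0 j0 where x0: "x = (p0, j0)" by (cases x)
    obtain i0 where i0: "i0 \<le> n" "p0 = l ^ i0" "j0 \<in> psupp (a i0)"
      using x(1) unfolding x0 PL_iff by blast
    have cj0: "coeff (a i0) j0 \<noteq> 0" using i0(3) unfolding psupp_def by simp
    have dj0: "j0 \<le> degree (a i0)" using i0(3) by (rule psupp_deg)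
    have e0: "v * of_nat (l ^ i0) + of_nat j0 = P v" using x(2) unfolding x0 i0(2) by simp
    have vR: "v \<notin> R" using vG unfolding G_def by blast
    define t where "t = (\<lambda>ij. if T (fst ij) (snd ij) (P v) = v then coeff (a (fst ij)) (snd ij) else 0)"
    define A where "A = (SIGMA i:{..n}. {..degree (a i)})"
    have finA: "finite A" unfolding A_def by (rule finite_SigmaI) auto
    have cA: "c v = sum t A" unfolding c_def A_def t_def
      by (subst sum.Sigma) (auto simp: case_prod_unfold)
    have inA: "(i0, j0) \<in> A" unfolding A_def using i0(1) dj0 by blast
    have zero: "t ij = 0" if "ij \<in> A - {(i0, j0)}" for ij
    proof (rule ccontr)
      assume nz: "t ij \<noteq> 0"
      obtain i j where ij: "ij = (i, j)" by (cases ij)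
      have i: "i \<le> n" using that unfolding ij A_def by blast
      have tv: "T i j (P v) = v" and cj: "coeff (a i) j \<noteq> 0"
        using nz unfolding t_def ij by (auto split: if_splits)
      have ej: "v * of_nat (l ^ i) + of_nat j = P v" using tv K1 by blast
      have "i = i0 \<and> j = j0"
        using slope_lemma[OF ns vR i i0(1) cj cj0 ej[unfolded P_def] e0[unfolded P_def]] .
      then show False using that unfolding ij by blast
    qed
    have "sum t A = t (i0, j0) + sum t (A - {(i0, j0)})" using finA inA by (rule sum.remove)
    also have "sum t (A - {(i0, j0)}) = 0" using zero by (intro sum.neutral) blast
    also have "t (i0, j0) = coeff (a i0) j0"
    proof -
      have "T i0 j0 (P v) = v" using K1 e0 by blast
      then show ?thesis unfolding t_def by simp
    qed
    finally show ?thesis using cA cj0 by simp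
  qed
  have K4: "Lop l n a f (P v) = g (P v)" if vG: "v \<in> G" for v
  proof -
    have pt: "coeff (a i) j * f (T i j (P v)) =
        (if T i j (P v) = v then coeff (a i) j else 0) * f v +
        (if T i j (P v) \<noteq> v \<and> T i j (P v) \<in> G \<and> T i j (P v) < v then coeff (a i) j * f (T i j (P v)) else 0)"
      if i: "i \<le> n" for i j
    proof (cases "T i j (P v) = v")
      case True then show ?thesis by simp
    next
      case ne: False
      show ?thesis
      proof (cases "T i j (P v) \<in> G \<and> T i j (P v) < v")
        case True then show ?thesis using ne by simp
      next
        case False
        have "coeff (a i) j * f (T i j (P v)) = 0"
        proof (cases "T i j (P v) \<in> G")
          case False then show ?thesis using f0 by simp
        next
          case True
          with \<open>\<not> (T i j (P v) \<in> G \<and> T i j (P v) < v)\<close> ne have gt: "v < T i j (P v)" by auto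
          show ?thesis
          proof (rule ccontr)
            assume "coeff (a i) j * f (T i j (P v)) \<noteq> 0"
            then have "coeff (a i) j \<noteq> 0" by auto
            then have "P (T i j (P v)) \<le> P v" using K2 i by blast
            moreover have "P v < P (T i j (P v))" using psi_mono[OF gt] unfolding P_def by simp
            ultimately show False by simp
          qed
        qed
        then show ?thesis using ne False by simp
      qed
    qed
    have "Lop l n a f (P v) = (\<Sum>i\<le>n. \<Sum>j\<le>degree (a i). coeff (a i) j * f (T i j (P v)))"
      unfolding Lop_def T_def by simp
    also have "\<dots> = (\<Sum>i\<le>n. \<Sum>j\<le>degree (a i).
        (if T i j (P v) = v then coeff (a i) j else 0) * f v +
        (if T i j (P v) \<noteq> v \<and> T i j (P v) \<in> G \<and> T i j (P v) < v then coeff (a i) j * f (T i j (P v)) else 0))"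
      using pt by (intro sum.cong refl) auto
    also have "\<dots> = c v * f v + S f v"
      unfolding c_def S_def by (simp add: sum.distrib sum_distrib_right)
    also have "\<dots> = g (P v)"
    proof -
      have "f v = (g (P v) - S f v) / c v" using fv[of v] vG unfolding F_def by simp
      then show ?thesis using K3[OF vG] by simp
    qed
    finally show ?thesis .
  qed
  have K5: "Lop l n a f q = 0" if nq: "q \<notin> P ` G" for q
  proof -
    have zt: "coeff (a i) j * f (T i j q) = 0" if i: "i \<le> n" for i j
    proof (rule ccontr)
      assume "coeff (a i) j * f (T i j q) \<noteq> 0"
      then have cj: "coeff (a i) j \<noteq> 0" and fT: "f (T i j q) \<noteq> 0" by auto
      have TG: "T i j q \<in> G" using fT f0 by blast
      have eqT: "T i j q * of_nat (l ^ i) + of_nat j = q" using K1 by blast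
      have "q \<in> Psi l n a (T i j q)" using PsiI[OF pair_in_PL[OF i cj], of "T i j q"] unfolding eqT .
      then have "piL l n a q \<in> G" using sub TG unfolding G_def by blast
      moreover have "P (piL l n a q) = q" unfolding P_def by (rule psi_piL)
      ultimately show False using nq by (metis image_eqI)
    qed
    show ?thesis unfolding Lop_def
    proof (intro sum.neutral ballI)
      fix i j assume "i \<in> {..n}" "j \<in> {..degree (a i)}"
      then show "coeff (a i) j * f ((q - of_nat j) / of_nat (l ^ i)) = 0"
        using zt[of i j] unfolding T_def by simp
    qed
  qed
  have "Lop l n a f = g"
  proof
    fix q
    show "Lop l n a f q = g q"
    proof (cases "q \<in> P ` G")
      case True
      then obtain v where "v \<in> G" "q = P v" by blast
      then show ?thesis using K4 by simp
    next
      case False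
      then have "g q = 0" using gs unfolding supp_def G_def P_def by blast
      then show ?thesis using K5[OF False] by simp
    qed
  qed
  moreover have "hahn f"
    unfolding hahn_def well_ordered_set_def
  proof (intro allI impI)
    fix Q assume "Q \<subseteq> supp f \<and> Q \<noteq> {}"
    then have "Q \<subseteq> V \<and> Q \<noteq> {}" using suppf GV by blast
    then show "\<exists>m\<in>Q. \<forall>x\<in>Q. m \<le> x" using wo unfolding well_ordered_set_def by blast
  qed
  ultimately show ?thesis using suppf unfolding G_def by blast
qed

end

theorem mainTheorem16:
  fixes l n :: nat and a :: "nat \<Rightarrow> 'k::field poly" and V R :: "rat set"
  assumes "l \<ge> 2" and "n \<ge> 1" and "a 0 \<noteq> 0" and "a n \<noteq> 0"
    and "hypH l n a V" and "star_prop l n a V R"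
  shows "\<forall>g. hahn g \<and> supp g \<subseteq> psi l n a ` (V - R) \<longrightarrow>
           (\<exists>f. hahn f \<and> supp f \<subseteq> V - R \<and> Lop l n a f = g)"
proof (intro allI impI)
  fix g :: "rat \<Rightarrow> 'k"
  assume g: "hahn g \<and> supp g \<subseteq> psi l n a ` (V - R)"
  interpret mset l n a using assms(1,3) by unfold_locales
  have wo: "well_ordered_set V" using assms(5) unfolding hypH_def by blast
  have ns: "neg_slopes_in l n a R" and sub: "(\<Union>v\<in>V - R. piL l n a ` Psi l n a v) = V - R"
    using assms(6) unfolding star_prop_def by blast+
  show "\<exists>f. hahn f \<and> supp f \<subseteq> V - R \<and> Lop l n a f = g"
    using main_construction[OF ns sub wo] g by blast
qed

end
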